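(* For all $m,t\in\mathbb{N}$, $R_t(0,m) = 2^m-\lceil 2^{m-t}\rceil$.
   Context: For a $t\times n$ matrix $\mathbf{v}$ over $\mathbb{F}_2$ with rows $\overline{v}_1,\dots,\overline{v}_t$, $\mathrm{wt}^{(t)}(\mathbf{v})=\left|\bigcup_{i} \mathrm{supp}(\overline{v}_i)\right|$ and $d^{(t)}(\mathbf{u},\mathbf{v})=\mathrm{wt}^{(t)}(\mathbf{u}-\mathbf{v})$. For a linear code $C\subseteq\mathbb{F}_2^n$, $C^t$ is the set of $t\times n$ matrices all of whose rows lie in $C$, and the $t$-th generalized covering radius $R_t(C)$ is the smallest integer $\rho$ such that for every $\mathbf{v}\in\mathbb{F}_2^{t\times n}$ some $\mathbf{c}\in C^t$ has $d^{(t)}(\mathbf{v},\mathbf{c})\le\rho$. $\mathrm{RM}(0,m)=\{\overline{0},\overline{1}\}\subseteq\mathbb{F}_2^{2^m}$ is the binary repetition code of length $2^m$, and $R_t(0,m)=R_t(\mathrm{RM}(0,m))$. *)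

theory Defs
  imports Complex_Main
begin

text \<open>F_2 is modelled by bool (addition / subtraction = exclusive or).
A vector of F_2^n is a function nat => bool vanishing outside {0..<n};
a t x n matrix is a function nat => nat => bool (row index, column index)
vanishing outside {0..<t} x {0..<n}.\<close>

definition words :: "nat \<Rightarrow> (nat \<Rightarrow> bool) set" where
  "words n = {x. \<forall>j. n \<le> j \<longrightarrow> \<not> x j}"

definition matrices :: "nat \<Rightarrow> nat \<Rightarrow> (nat \<Rightarrow> nat \<Rightarrow> bool) set" where
  "matrices t n = {v. \<forall>i j. (t \<le> i \<or> n \<le> j) \<longrightarrow> \<not> v i j}"

definition linear_code :: "nat \<Rightarrow> (nat \<Rightarrow> bool) set \<Rightarrow> bool" where
  "linear_code n C \<longleftrightarrow> C \<subseteq> words n \<and> (\<lambda>j. False) \<in> C \<and>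
     (\<forall>x\<in>C. \<forall>y\<in>C. (\<lambda>j. x j \<noteq> y j) \<in> C)"

definition gwt :: "nat \<Rightarrow> nat \<Rightarrow> (nat \<Rightarrow> nat \<Rightarrow> bool) \<Rightarrow> nat" where
  "gwt t n v = card {j \<in> {..<n}. \<exists>i<t. v i j}"

definition gdist :: "nat \<Rightarrow> nat \<Rightarrow> (nat \<Rightarrow> nat \<Rightarrow> bool) \<Rightarrow> (nat \<Rightarrow> nat \<Rightarrow> bool) \<Rightarrow> nat" where
  "gdist t n u v = gwt t n (\<lambda>i j. u i j \<noteq> v i j)"

definition code_pow :: "nat \<Rightarrow> nat \<Rightarrow> (nat \<Rightarrow> bool) set \<Rightarrow> (nat \<Rightarrow> nat \<Rightarrow> bool) set" where
  "code_pow t n C = {c \<in> matrices t n. \<forall>i<t. c i \<in> C}"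

definition gen_cov_radius :: "nat \<Rightarrow> nat \<Rightarrow> (nat \<Rightarrow> bool) set \<Rightarrow> nat" where
  "gen_cov_radius t n C =
     (LEAST \<rho>. \<forall>v\<in>matrices t n. \<exists>c\<in>code_pow t n C. gdist t n v c \<le> \<rho>)"

definition RM0 :: "nat \<Rightarrow> (nat \<Rightarrow> bool) set" where
  "RM0 m = {(\<lambda>j. False), (\<lambda>j. j < 2 ^ m)}"

definition R0 :: "nat \<Rightarrow> nat \<Rightarrow> nat" where
  "R0 t m = gen_cov_radius t (2 ^ m) (RM0 m)"

end

theory Submission
  imports Defs
begin

lemma key_bounds:
  fixes m t :: nat
  defines "k \<equiv> (if t \<le> m then 2 ^ (m - t) else 1::nat)"
  shows "2 ^ t * (k - 1) < (2::nat) ^ m" "(2::nat) ^ m \<le> 2 ^ t * k" "k \<le> 2 ^ m"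
    "\<lceil>(2::real) powr (real m - real t)\<rceil> = int k"
proof -
  show "2 ^ t * (k - 1) < (2::nat) ^ m"
  proof (cases "t \<le> m")
    case True
    have "(2::nat) ^ t * 2 ^ (m - t) = 2 ^ m" using True by (simp flip: power_add)
    moreover have "(0::nat) < 2 ^ (m - t)" by simp
    ultimately show ?thesis using True unfolding k_def
      by (metis diff_less less_one mult_less_cancel1 pos2 zero_less_power)
  qed (simp add: k_def)
  show "(2::nat) ^ m \<le> 2 ^ t * k"
  proof (cases "t \<le> m")
    case True
    have "(2::nat) ^ t * 2 ^ (m - t) = 2 ^ m" using True by (simp flip: power_add)
    then show ?thesis using True unfolding k_def by simp
  next
    case False
    then show ?thesis unfolding k_def by simp
  qed
  show "k \<le> 2 ^ m" unfolding k_def by (simp add: power_increasing)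
  show "\<lceil>(2::real) powr (real m - real t)\<rceil> = int k"
  proof (cases "t \<le> m")
    case True
    have "(2::real) powr (real m - real t) = 2 ^ (m - t)"
      using True by (simp add: powr_realpow flip: of_nat_diff)
    then show ?thesis using True unfolding k_def by simp
  next
    case False
    have "(2::real) powr (real m - real t) \<le> 2 powr 0"
      using False by (intro powr_mono) auto
    moreover have "(2::real) powr (real m - real t) > 0" by simp
    ultimately show ?thesis using False unfolding k_def
      by (simp add: ceiling_eq_iff)
  qed
qed

lemma gdist_eq:
  "gdist t n v c = n - card {j\<in>{..<n}. \<forall>i<t. v i j = c i j}"
proof -
  have "{j \<in> {..<n}. \<exists>i<t. v i j \<noteq> c i j} = {..<n} - {j\<in>{..<n}. \<forall>i<t. v i j = c i j}"
    by auto
  moreover have "card ({..<n} - {j\<in>{..<n}. \<forall>i<t. v i j = c i j}) = n - card {j\<in>{..<n}. \<forall>i<t. v i j = c i j}"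
    by (subst card_Diff_subset) auto
  ultimately show ?thesis unfolding gdist_def gwt_def by simp
qed

lemma upper:
  fixes m t k :: nat
  assumes hk: "2 ^ t * (k - 1) < (2::nat) ^ m"
    and v: "v \<in> matrices t (2^m)"
  shows "\<exists>c\<in>code_pow t (2^m) (RM0 m). gdist t (2^m) v c \<le> 2^m - k"
proof -
  define N :: nat where "N = 2^m"
  define P where "P j = {i. i < t \<and> v i j}" for j
  define A where "A S = {j\<in>{..<N}. P j = S}" for S
  have "\<exists>S\<in>Pow {..<t}. k \<le> card (A S)"
  proof (rule ccontr)
    assume "\<not> ?thesis"
    then have nk: "\<And>S. S \<in> Pow {..<t} \<Longrightarrow> \<not> k \<le> card (A S)" by blast
    have lt: "\<And>S. S \<in> Pow {..<t} \<Longrightarrow> card (A S) \<le> k - 1"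
    proof -
      fix S assume "S \<in> Pow {..<t}"
      then have "\<not> k \<le> card (A S)" by (rule nk)
      then show "card (A S) \<le> k - 1" by linarith
    qed
    have "{..<N} = (\<Union>S\<in>Pow {..<t}. A S)"
    proof
      show "{..<N} \<subseteq> (\<Union>S\<in>Pow {..<t}. A S)"
      proof
        fix j assume "j \<in> {..<N}"
        then have "j \<in> A (P j)" unfolding A_def by simp
        moreover have "P j \<in> Pow {..<t}" unfolding P_def by auto
        ultimately show "j \<in> (\<Union>S\<in>Pow {..<t}. A S)" by blast
      qed
      show "(\<Union>S\<in>Pow {..<t}. A S) \<subseteq> {..<N}" unfolding A_def by auto
    qed
    then have "N = card (\<Union>S\<in>Pow {..<t}. A S)" by (metis card_lessThan)
    also have "\<dots> = (\<Sum>S\<in>Pow {..<t}. card (A S))"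
      by (rule card_UN_disjoint) (auto simp: A_def)
    also have "\<dots> \<le> card (Pow {..<t}) * (k - 1)"
      using sum_bounded_above[of "Pow {..<t}" "\<lambda>S. card (A S)" "k - 1"] lt by simp
    also have "\<dots> = 2 ^ t * (k - 1)" by (simp add: card_Pow)
    finally show False using hk N_def by simp
  qed
  then obtain S where S: "S \<subseteq> {..<t}" "k \<le> card (A S)" by auto
  define c where "c i j = (i < t \<and> j < N \<and> i \<in> S)" for i j
  have cin: "c \<in> code_pow t N (RM0 m)"
    unfolding code_pow_def matrices_def RM0_def c_def N_def
    by (auto simp: fun_eq_iff)
  have "A S \<subseteq> {j\<in>{..<N}. \<forall>i<t. v i j = c i j}"
    unfolding A_def P_def c_def by auto
  then have "k \<le> card {j\<in>{..<N}. \<forall>i<t. v i j = c i j}"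
    using S(2) card_mono[of "{j\<in>{..<N}. \<forall>i<t. v i j = c i j}" "A S"] by simp
  then have "gdist t N v c \<le> N - k" by (simp add: gdist_eq)
  then show ?thesis using cin N_def by auto
qed

lemma lower:
  fixes m t k :: nat
  assumes hk: "(2::nat) ^ m \<le> 2 ^ t * k"
  shows "\<exists>v\<in>matrices t (2^m). \<forall>c\<in>code_pow t (2^m) (RM0 m). 2^m - k \<le> gdist t (2^m) v c"
proof -
  define N :: nat where "N = 2^m"
  define T :: nat where "T = 2^t"
  define v where "v i j = (i < t \<and> j < N \<and> bit j i)" for i j
  have vin: "v \<in> matrices t N" unfolding v_def matrices_def by auto
  have cnt: "card {j\<in>{..<N}. j mod T = r} \<le> k" for r
  proof -
    have "{j\<in>{..<N}. j mod T = r} \<subseteq> (\<lambda>q. q * T + r) ` {..<k}"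
    proof
      fix j assume j: "j \<in> {j\<in>{..<N}. j mod T = r}"
      have "j < k * T" using j hk N_def T_def by (auto simp: mult.commute)
      then have "j div T < k" by (simp add: div_less_iff_less_mult T_def)
      moreover have "j = j div T * T + r" using j by (metis (mono_tags) div_mult_mod_eq mem_Collect_eq)
      ultimately show "j \<in> (\<lambda>q. q * T + r) ` {..<k}" by blast
    qed
    then have "card {j\<in>{..<N}. j mod T = r} \<le> card ((\<lambda>q. q * T + r) ` {..<k})"
      by (rule card_mono[rotated]) simp
    also have "\<dots> \<le> k" using card_image_le[of "{..<k}" "\<lambda>q. q * T + r"] by simp
    finally show ?thesis .
  qed
  have "2^m - k \<le> gdist t N v c" if c: "c \<in> code_pow t N (RM0 m)" for c
  proof -
    define M where "M = {j\<in>{..<N}. \<forall>i<t. v i j = c i j}"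
    have "card M \<le> k"
    proof (cases "M = {}")
      case True then show ?thesis by simp
    next
      case False
      then obtain j0 where j0: "j0 \<in> M" by auto
      have crow: "c i j = c i 0" if "i < t" "j < N" for i j
      proof -
        have "c i \<in> RM0 m" using c that unfolding code_pow_def by auto
        moreover have "0 < N" using N_def by simp
        ultimately show ?thesis using that unfolding RM0_def N_def by auto
      qed
      have "M \<subseteq> {j\<in>{..<N}. j mod T = j0 mod T}"
      proof
        fix j assume j: "j \<in> M"
        have "\<forall>i<t. bit j i = bit j0 i"
        proof (intro allI impI)
          fix i assume i: "i < t"
          have "bit j i = c i j" using j i unfolding M_def v_def by auto
          also have "\<dots> = c i 0"
          proof -
            have "j < N" using j unfolding M_def by simp
            then show ?thesis by (rule crow[OF i])
          qed
          also have "\<dots> = c i j0"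
          proof -
            have "j0 < N" using j0 unfolding M_def by simp
            then show ?thesis by (rule crow[OF i, symmetric])
          qed
          also have "\<dots> = bit j0 i" using j0 i unfolding M_def v_def by auto
          finally show "bit j i = bit j0 i" .
        qed
        then have "take_bit t j = take_bit t j0"
          by (intro bit_eqI) (auto simp: bit_take_bit_iff)
        then have "j mod T = j0 mod T" by (simp add: take_bit_eq_mod T_def)
        then show "j \<in> {j\<in>{..<N}. j mod T = j0 mod T}" using j M_def by auto
      qed
      then have "card M \<le> card {j\<in>{..<N}. j mod T = j0 mod T}"
        by (intro card_mono) auto
      then show ?thesis using cnt[of "j0 mod T"] by simp
    qed
    then show ?thesis by (simp add: gdist_eq M_def N_def)
  qed
  then show ?thesis using vin N_def by auto
qed

theorem proposition9:
  fixes m t :: nat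
  shows "int (R0 t m) = 2 ^ m - \<lceil>(2::real) powr (real m - real t)\<rceil>"
proof -
  define k where "k \<equiv> (if t \<le> m then 2 ^ (m - t) else 1::nat)"
  note kb = key_bounds[where m=m and t=t, folded k_def]
  have "gen_cov_radius t (2 ^ m) (RM0 m) = 2 ^ m - k"
    unfolding gen_cov_radius_def
  proof (rule Least_equality)
    show "\<forall>v\<in>matrices t (2 ^ m). \<exists>c\<in>code_pow t (2 ^ m) (RM0 m). gdist t (2 ^ m) v c \<le> 2 ^ m - k"
      using upper[OF kb(1)] by blast
  next
    fix y assume y: "\<forall>v\<in>matrices t (2 ^ m). \<exists>c\<in>code_pow t (2 ^ m) (RM0 m). gdist t (2 ^ m) v c \<le> y"
    obtain v where v: "v \<in> matrices t (2^m)" "\<forall>c\<in>code_pow t (2^m) (RM0 m). 2^m - k \<le> gdist t (2^m) v c"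
      using lower[OF kb(2)] by blast
    then obtain c where "c \<in> code_pow t (2 ^ m) (RM0 m)" "gdist t (2 ^ m) v c \<le> y" using y by blast
    then show "2 ^ m - k \<le> y" using v by force
  qed
  then have "int (R0 t m) = int (2 ^ m - k)" unfolding R0_def by simp
  also have "\<dots> = int (2 ^ m) - int k" by (rule of_nat_diff[OF kb(3)])
  also have "\<dots> = 2 ^ m - \<lceil>(2::real) powr (real m - real t)\<rceil>"
    unfolding kb(4) of_nat_power by simp
  finally show ?thesis .
qed

end
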